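(* Let $p$ be a complex polynomial, $Y_p=\mathbf1-p(L)$, and assume $Y_p$ is injective and $p(L)^k\to0$ strongly as $k\to\infty$. Then $[N,\log Y_p]=Lp'(L)Y_p^{-1}$ on $\mathrm{ran}(Y_p)\cap\mathrm D(N\log Y_p)\cap\mathrm D(\log(Y_p)N)$, and $[N,\log(Y_p^* )]=-L^*p'(L^* )(Y_p^* )^{-1}$ on $\mathrm{ran}(Y_p^* )\cap\mathrm D(N\log(Y_p^* ))\cap\mathrm D(\log(Y_p^* )N)$.
   Context: $\ell^2=\ell^2(\mathbb N)$, $\mathbb N=\{0,1,\dots\}$, basis $(\xi_n)$; $N\xi_n=n\xi_n$ (self-adjoint, maximal domain); $L$ left shift ($L\xi_n=\xi_{n-1}$, $L\xi_0=0$), $L^*$ its adjoint (right shift). $p(L)$, $p'(L)$ are obtained by substitution; $p'(L^* )$ likewise. For a linear operator $A$, $\mathrm D(\log A)=\{f\in\bigcap_{k\ge0}\mathrm D(A^k):\lim_K\sum_{k=1}^K\frac1k(\mathbf1-A)^kf\text{ exists}\}$, $\log Af=-\sum_{k\ge1}\frac1k(\mathbf1-A)^kf$. Commutators $[A,B]=AB-BA$ on $\mathrm D(AB)\cap\mathrm D(BA)$. *)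

theory Defs
  imports Complex_Main "HOL-Computational_Algebra.Polynomial"
begin

type_synonym vec = "nat \<Rightarrow> complex"

definition l2 :: "vec set" where
  "l2 = {f. summable (\<lambda>n. (cmod (f n))^2)}"

definition l2norm :: "vec \<Rightarrow> real" where
  "l2norm f = sqrt (\<Sum>n. (cmod (f n))^2)"

definition Nop :: "vec \<Rightarrow> vec" where
  "Nop f = (\<lambda>n. of_nat n * f n)"

definition DN :: "vec set" where
  "DN = {f \<in> l2. Nop f \<in> l2}"

definition Lsh :: "vec \<Rightarrow> vec" where
  "Lsh f = (\<lambda>n. f (n + 1))"

definition Rsh :: "vec \<Rightarrow> vec" where
  "Rsh f = (\<lambda>n. if n = 0 then 0 else f (n - 1))"

definition polyL :: "complex poly \<Rightarrow> vec \<Rightarrow> vec" where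
  "polyL p f = (\<lambda>n. \<Sum>i\<le>degree p. coeff p i * f (n + i))"

definition polyLs :: "complex poly \<Rightarrow> vec \<Rightarrow> vec" where
  "polyLs p f = (\<lambda>n. \<Sum>i\<le>degree p. coeff p i * (if i \<le> n then f (n - i) else 0))"

text \<open>Y_p = 1 - p(L) and its adjoint Y_p^* = 1 - p(L)^* = 1 - pbar(L^*).\<close>
definition Yop :: "complex poly \<Rightarrow> vec \<Rightarrow> vec" where
  "Yop p f = (\<lambda>n. f n - polyL p f n)"

definition Ystar :: "complex poly \<Rightarrow> vec \<Rightarrow> vec" where
  "Ystar p f = (\<lambda>n. f n - polyLs (map_poly cnj p) f n)"

text \<open>Logarithm of an operator A (acting on sequences), via the series
  log A f = - sum_{k>=1} (1/k) (1 - A)^k f, convergence in l2-norm.\<close>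
definition logPartial :: "(vec \<Rightarrow> vec) \<Rightarrow> vec \<Rightarrow> nat \<Rightarrow> vec" where
  "logPartial A f K = (\<lambda>n. \<Sum>k=1..K. (1 / of_nat k) * (((\<lambda>h m. h m - A h m) ^^ k) f) n)"

definition l2_tendsto :: "(nat \<Rightarrow> vec) \<Rightarrow> vec \<Rightarrow> bool" where
  "l2_tendsto S g \<longleftrightarrow> g \<in> l2 \<and> (\<forall>K. S K \<in> l2) \<and>
     (\<lambda>K. l2norm (\<lambda>n. S K n - g n)) \<longlonglongrightarrow> 0"

definition logDom :: "(vec \<Rightarrow> vec) \<Rightarrow> vec set" where
  "logDom A = {f \<in> l2. (\<forall>k. (A ^^ k) f \<in> l2) \<and> (\<exists>g. l2_tendsto (logPartial A f) g)}"

definition logOp :: "(vec \<Rightarrow> vec) \<Rightarrow> vec \<Rightarrow> vec" where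
  "logOp A f = (\<lambda>n. - (THE g. l2_tendsto (logPartial A f) g) n)"

definition DNlog :: "(vec \<Rightarrow> vec) \<Rightarrow> vec set" where
  "DNlog A = {f \<in> logDom A. logOp A f \<in> DN}"

definition DlogN :: "(vec \<Rightarrow> vec) \<Rightarrow> vec set" where
  "DlogN A = {f \<in> DN. Nop f \<in> logDom A}"

end

theory Submission
  imports Defs
begin

lemma sq_sum_le: "(cmod a + cmod b)^2 \<le> 2*(cmod a)^2 + 2*(cmod b)^2"
proof -
  have "0 \<le> (cmod a - cmod b)^2" by simp
  thus ?thesis by (simp add: power2_eq_square algebra_simps)
qed

lemma l2_diff: "f \<in> l2 \<Longrightarrow> g \<in> l2 \<Longrightarrow> (\<lambda>n. f n - g n) \<in> l2"
  unfolding l2_def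
proof (simp, rule summable_comparison_test[where g="\<lambda>n. 2*(cmod (f n))^2 + 2*(cmod (g n))^2"])
  assume a: "summable (\<lambda>n. (cmod (f n))\<^sup>2)" "summable (\<lambda>n. (cmod (g n))\<^sup>2)"
  show "\<exists>N. \<forall>n\<ge>N. norm ((cmod (f n - g n))\<^sup>2) \<le> 2 * (cmod (f n))\<^sup>2 + 2 * (cmod (g n))\<^sup>2"
  proof (intro exI allI impI)
    fix n
    have "cmod (f n - g n) \<le> cmod (f n) + cmod (g n)" by (rule norm_triangle_ineq4)
    hence "(cmod (f n - g n))^2 \<le> (cmod (f n) + cmod (g n))^2" by (simp add: power_mono)
    hence "(cmod (f n - g n))^2 \<le> 2 * (cmod (f n))\<^sup>2 + 2 * (cmod (g n))\<^sup>2"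
      using sq_sum_le[of "f n" "g n"] by linarith
    thus "norm ((cmod (f n - g n))\<^sup>2) \<le> 2 * (cmod (f n))\<^sup>2 + 2 * (cmod (g n))\<^sup>2" by simp
  qed
  show "summable (\<lambda>n. 2 * (cmod (f n))\<^sup>2 + 2 * (cmod (g n))\<^sup>2)"
    using a by (intro summable_add summable_mult) auto
qed

lemma l2_add: "f \<in> l2 \<Longrightarrow> g \<in> l2 \<Longrightarrow> (\<lambda>n. f n + g n) \<in> l2"
  unfolding l2_def
proof (simp, rule summable_comparison_test[where g="\<lambda>n. 2*(cmod (f n))^2 + 2*(cmod (g n))^2"])
  assume a: "summable (\<lambda>n. (cmod (f n))\<^sup>2)" "summable (\<lambda>n. (cmod (g n))\<^sup>2)"
  show "\<exists>N. \<forall>n\<ge>N. norm ((cmod (f n + g n))\<^sup>2) \<le> 2 * (cmod (f n))\<^sup>2 + 2 * (cmod (g n))\<^sup>2"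
  proof (intro exI allI impI)
    fix n
    have "cmod (f n + g n) \<le> cmod (f n) + cmod (g n)" by (rule norm_triangle_ineq)
    hence "(cmod (f n + g n))^2 \<le> (cmod (f n) + cmod (g n))^2" by (simp add: power_mono)
    hence "(cmod (f n + g n))^2 \<le> 2 * (cmod (f n))\<^sup>2 + 2 * (cmod (g n))\<^sup>2"
      using sq_sum_le[of "f n" "g n"] by linarith
    thus "norm ((cmod (f n + g n))\<^sup>2) \<le> 2 * (cmod (f n))\<^sup>2 + 2 * (cmod (g n))\<^sup>2" by simp
  qed
  show "summable (\<lambda>n. 2 * (cmod (f n))\<^sup>2 + 2 * (cmod (g n))\<^sup>2)"
    using a by (intro summable_add summable_mult) auto
qed

lemma l2_scale: "f \<in> l2 \<Longrightarrow> (\<lambda>n. c * f n) \<in> l2"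
  unfolding l2_def by (simp add: norm_mult power_mult_distrib summable_mult)

lemma l2_shift: "f \<in> l2 \<Longrightarrow> (\<lambda>n. f (n + i)) \<in> l2"
  unfolding l2_def using summable_ignore_initial_segment[of "\<lambda>n. (cmod (f n))^2" i] by simp

lemma l2_zero: "(\<lambda>n. 0) \<in> l2" unfolding l2_def by simp

lemma l2_sum: "finite I \<Longrightarrow> (\<forall>i\<in>I. F i \<in> l2) \<Longrightarrow> (\<lambda>n. \<Sum>i\<in>I. F i n) \<in> l2"
  by (induction I rule: finite_induct) (auto simp: l2_zero intro: l2_add)

lemma l2_pt: assumes "f \<in> l2" shows "cmod (f n) \<le> l2norm f"
proof -
  have s: "summable (\<lambda>n. (cmod (f n))^2)" using assms by (simp add: l2_def)
  have "(\<Sum>m\<in>{n}. (cmod (f m))^2) \<le> (\<Sum>m. (cmod (f m))^2)"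
    by (rule sum_le_suminf[OF s]) auto
  hence "cmod (f n) \<le> sqrt (\<Sum>m. (cmod (f m))^2)" by (simp add: real_le_rsqrt)
  thus ?thesis unfolding l2norm_def by simp
qed

lemma l2_tendsto_pt: assumes "l2_tendsto S g" shows "(\<lambda>K. S K n) \<longlonglongrightarrow> g n"
proof -
  have g: "g \<in> l2" and S: "\<And>K. S K \<in> l2" and L: "(\<lambda>K. l2norm (\<lambda>n. S K n - g n)) \<longlonglongrightarrow> 0"
    using assms by (auto simp: l2_tendsto_def)
  have "(\<lambda>K. S K n - g n) \<longlonglongrightarrow> 0"
  proof (rule tendsto_norm_zero_cancel, rule real_tendsto_sandwich[OF _ _ tendsto_const L])
    show "\<forall>\<^sub>F K in sequentially. norm (S K n - g n) \<le> l2norm (\<lambda>n. S K n - g n)"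
      using l2_pt[OF l2_diff[OF S g]] by auto
  qed auto
  thus ?thesis by (simp add: LIM_zero_iff)
qed

lemma l2_tendsto_unique: "l2_tendsto S g1 \<Longrightarrow> l2_tendsto S g2 \<Longrightarrow> g1 = g2"
  by (rule ext, rule LIMSEQ_unique[OF l2_tendsto_pt l2_tendsto_pt])

lemma logOp_lim: assumes "f \<in> logDom A"
  shows "(\<lambda>K. logPartial A f K n) \<longlonglongrightarrow> - logOp A f n"
proof -
  obtain g where g: "l2_tendsto (logPartial A f) g" using assms by (auto simp: logDom_def)
  have "(THE g. l2_tendsto (logPartial A f) g) = g"
    using g l2_tendsto_unique by blast
  thus ?thesis using l2_tendsto_pt[OF g] by (simp add: logOp_def)
qed


lemma polyL_ext: "degree p \<le> M \<Longrightarrow> polyL p f n = (\<Sum>i\<le>M. coeff p i * f (n+i))"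
  unfolding polyL_def by (rule sum.mono_neutral_left) (auto simp: coeff_eq_0)

lemma polyLs_ext: "degree p \<le> M \<Longrightarrow>
   polyLs p f n = (\<Sum>i\<le>M. coeff p i * (if i \<le> n then f (n-i) else 0))"
  unfolding polyLs_def by (rule sum.mono_neutral_left) (auto simp: coeff_eq_0)

lemma polyL_l2: "f \<in> l2 \<Longrightarrow> polyL p f \<in> l2"
proof -
  assume f: "f \<in> l2"
  have "\<forall>i\<in>{..degree p}. (\<lambda>n. coeff p i * f (n+i)) \<in> l2" using l2_scale[OF l2_shift[OF f]] by blast
  thus ?thesis unfolding polyL_def using l2_sum[of "{..degree p}" "\<lambda>i n. coeff p i * f (n+i)"] by simp
qed

lemma polyL_pow_l2: "f \<in> l2 \<Longrightarrow> (polyL p ^^ k) f \<in> l2"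
  by (induction k) (auto intro: polyL_l2)

lemma polyL_diff: "polyL p (\<lambda>n. u n - v n) = (\<lambda>n. polyL p u n - polyL p v n)"
  unfolding polyL_def by (simp add: sum_subtractf right_diff_distrib)

lemma polyL_scale: "polyL p (\<lambda>n. c * u n) = (\<lambda>n. c * polyL p u n)"
  unfolding polyL_def by (simp add: sum_distrib_left mult_ac)

lemma polyLs_diff: "polyLs p (\<lambda>n. u n - v n) = (\<lambda>n. polyLs p u n - polyLs p v n)"
  unfolding polyLs_def by (rule ext, subst sum_subtractf[symmetric], rule sum.cong, auto simp: algebra_simps)

lemma polyLs_scale: "polyLs p (\<lambda>n. c * u n) = (\<lambda>n. c * polyLs p u n)"
  unfolding polyLs_def by (auto simp add: sum_distrib_left mult_ac intro!: sum.cong)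

lemma funpow_diff:
  fixes A :: "vec \<Rightarrow> vec"
  assumes "\<And>u v. A (\<lambda>n. u n - v n) = (\<lambda>n. A u n - A v n)"
  shows "(A^^k) (\<lambda>n. u n - v n) = (\<lambda>n. (A^^k) u n - (A^^k) v n)"
proof (induction k arbitrary: u v)
  case 0 show ?case by simp
next
  case (Suc k) show ?case by (simp add: Suc assms)
qed

lemma funpow_scale:
  fixes A :: "vec \<Rightarrow> vec"
  assumes "\<And>c u. A (\<lambda>n. c * u n) = (\<lambda>n. c * A u n)"
  shows "(A^^k) (\<lambda>n. c * u n) = (\<lambda>n. c * (A^^k) u n)"
proof (induction k arbitrary: u)
  case 0 show ?case by simp
next
  case (Suc k) show ?case by (simp add: Suc assms)
qed

lemma Lsh_diff: "Lsh (\<lambda>n. u n - v n) = (\<lambda>n. Lsh u n - Lsh v n)" by (simp add: Lsh_def)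
lemma Lsh_scale: "Lsh (\<lambda>n. c * u n) = (\<lambda>n. c * Lsh u n)" by (simp add: Lsh_def)
lemma Rsh_diff: "Rsh (\<lambda>n. u n - v n) = (\<lambda>n. Rsh u n - Rsh v n)" by (rule ext) (simp add: Rsh_def)
lemma Rsh_scale: "Rsh (\<lambda>n. c * u n) = (\<lambda>n. c * Rsh u n)" by (rule ext) (simp add: Rsh_def)

lemma polyL_Lsh: "polyL p (Lsh h) = Lsh (polyL p h)"
  unfolding polyL_def Lsh_def by (simp add: ac_simps)

lemma polyL_comm: "polyL p (polyL r h) = polyL r (polyL p h)"
  unfolding polyL_def
  apply (rule ext)
  apply (simp add: sum_distrib_left)
  apply (subst sum.swap)
  apply (simp add: ac_simps)
  done

lemma polyLs_Rsh: "polyLs p (Rsh h) = Rsh (polyLs p h)"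
proof (rule ext)
  fix n show "polyLs p (Rsh h) n = Rsh (polyLs p h) n"
  proof (cases n)
    case 0 thus ?thesis unfolding polyLs_def Rsh_def by (auto intro!: sum.neutral)
  next
    case (Suc m) thus ?thesis unfolding polyLs_def Rsh_def
      by (auto intro!: sum.cong simp: Suc_diff_le)
  qed
qed

lemma polyLs_comm: "polyLs p (polyLs r h) = polyLs r (polyLs p h)"
proof (rule ext)
  fix n
  have e: "\<And>p r. polyLs p (polyLs r h) n =
     (\<Sum>i\<le>degree p. \<Sum>j\<le>degree r. coeff p i * coeff r j * (if i + j \<le> n then h (n - i - j) else 0))"
    unfolding polyLs_def
    by (auto simp: sum_distrib_left ac_simps intro!: sum.cong; arith)
  show "polyLs p (polyLs r h) n = polyLs r (polyLs p h) n"
    unfolding e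
    apply (subst sum.swap)
    apply (auto simp: ac_simps intro!: sum.cong; arith)
    done
qed


lemma comm_L: "(\<lambda>n. of_nat n * polyL p h n - polyL p (Nop h) n) = (\<lambda>n. - Lsh (polyL (pderiv p) h) n)"
proof (rule ext)
  fix n
  have 1: "of_nat n * polyL p h n - polyL p (Nop h) n
      = (\<Sum>i\<le>Suc (degree p). - (of_nat i * coeff p i * h (n+i)))"
    unfolding polyL_ext[of p "Suc (degree p)", OF le_SucI[OF order_refl]] Nop_def
    by (simp add: sum_distrib_left sum_subtractf[symmetric] algebra_simps)
  have 2: "(\<Sum>i\<le>Suc (degree p). - (of_nat i * coeff p i * h (n+i)))
      = - (\<Sum>i\<le>degree p. of_nat (Suc i) * coeff p (Suc i) * h (n + Suc i))"
    by (subst sum.atMost_Suc_shift) (simp add: sum_negf)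
  have 3: "Lsh (polyL (pderiv p) h) n = (\<Sum>i\<le>degree p. of_nat (Suc i) * coeff p (Suc i) * h (n + Suc i))"
    unfolding Lsh_def polyL_ext[of "pderiv p" "degree p", OF _] 
    by (simp add: polyL_ext[of "pderiv p" "degree p"] degree_pderiv coeff_pderiv)
  show "of_nat n * polyL p h n - polyL p (Nop h) n = - Lsh (polyL (pderiv p) h) n"
    using 1 2 3 by simp
qed

lemma comm_Ls: "(\<lambda>n. of_nat n * polyLs (map_poly cnj p) h n - polyLs (map_poly cnj p) (Nop h) n)
   = (\<lambda>n. Rsh (polyLs (map_poly cnj (pderiv p)) h) n)"
proof (rule ext)
  fix n
  have dm: "\<And>q::complex poly. degree (map_poly cnj q) = degree q" by (rule degree_map_poly) simp
  have dq: "degree (map_poly cnj p) \<le> Suc (degree p)"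
    using dm[of p] by simp
  have 1: "of_nat n * polyLs (map_poly cnj p) h n - polyLs (map_poly cnj p) (Nop h) n
      = (\<Sum>i\<le>Suc (degree p). cnj (coeff p i) * (if i \<le> n then of_nat i * h (n-i) else 0))"
    unfolding polyLs_ext[OF dq] Nop_def sum_distrib_left sum_subtractf[symmetric]
    by (rule sum.cong) (auto simp: coeff_map_poly of_nat_diff algebra_simps)
  have 2: "(\<Sum>i\<le>Suc (degree p). cnj (coeff p i) * (if i \<le> n then of_nat i * h (n-i) else 0))
      = (\<Sum>i\<le>degree p. cnj (coeff p (Suc i)) * (if Suc i \<le> n then of_nat (Suc i) * h (n - Suc i) else 0))"
    by (subst sum.atMost_Suc_shift) simp
  have dq': "degree (map_poly cnj (pderiv p)) \<le> degree p"
    using dm[of "pderiv p"] degree_pderiv[of p] by simp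
  have 3: "Rsh (polyLs (map_poly cnj (pderiv p)) h) n = 
      (\<Sum>i\<le>degree p. cnj (coeff p (Suc i)) * (if Suc i \<le> n then of_nat (Suc i) * h (n - Suc i) else 0))"
  proof (cases n)
    case 0 thus ?thesis by (simp add: Rsh_def)
  next
    case (Suc m) thus ?thesis
      unfolding Rsh_def polyLs_ext[OF dq']
      by (auto simp: coeff_map_poly coeff_pderiv intro!: sum.cong)
  qed
  show "of_nat n * polyLs (map_poly cnj p) h n - polyLs (map_poly cnj p) (Nop h) n
      = Rsh (polyLs (map_poly cnj (pderiv p)) h) n"
    using 1 2 3 by simp
qed


lemma comm_iter:
  fixes A B :: "vec \<Rightarrow> vec" and s :: complex
  assumes dA: "\<And>u v. A (\<lambda>n. u n - v n) = (\<lambda>n. A u n - A v n)"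
    and sA: "\<And>c u. A (\<lambda>n. c * u n) = (\<lambda>n. c * A u n)"
    and cm: "\<And>h. (\<lambda>n. of_nat n * A h n - A (Nop h) n) = (\<lambda>n. s * B h n)"
    and AB: "\<And>h. A (B h) = B (A h)"
  shows "\<forall>n. of_nat n * (A^^Suc k) h n - (A^^Suc k) (Nop h) n = of_nat (Suc k) * s * B ((A^^k) h) n"
proof (induction k)
  case 0 show ?case using cm[of h] by (simp add: fun_eq_iff)
next
  case (Suc k)
  define x where "x = (A^^Suc k) h"
  define y where "y = (A^^Suc k) (Nop h)"
  have ex: "(A^^Suc (Suc k)) h = A x" and ey: "(A^^Suc (Suc k)) (Nop h) = A y"
    by (simp_all add: x_def y_def)
  have fx: "(\<lambda>m. Nop x m - y m) = (\<lambda>m. (of_nat (Suc k) * s) * B ((A^^k) h) m)"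
    using Suc.IH by (simp add: Nop_def x_def y_def)
  show ?case
  proof
    fix n
    have "of_nat n * A x n - A y n = (of_nat n * A x n - A (Nop x) n) + (A (Nop x) n - A y n)" by simp
    also have "of_nat n * A x n - A (Nop x) n = s * B x n" using fun_cong[OF cm[of x], of n] by simp
    also have "A (Nop x) n - A y n = A (\<lambda>m. Nop x m - y m) n" using fun_cong[OF dA[of "Nop x" y], of n] by simp
    also have "\<dots> = (of_nat (Suc k) * s) * A (B ((A^^k) h)) n" unfolding fx sA by simp
    also have "A (B ((A^^k) h)) = B x" by (simp add: AB x_def)
    finally have "of_nat n * A x n - A y n = of_nat (Suc (Suc k)) * s * B x n"
      by (simp add: algebra_simps)
    thus "of_nat n * (A^^Suc (Suc k)) h n - (A^^Suc (Suc k)) (Nop h) n = of_nat (Suc (Suc k)) * s * B ((A^^Suc k) h) n"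
      unfolding ex ey x_def .
  qed
qed

lemma comm_sum:
  fixes A B :: "vec \<Rightarrow> vec" and s :: complex
  assumes dA: "\<And>u v. A (\<lambda>n. u n - v n) = (\<lambda>n. A u n - A v n)"
    and sA: "\<And>c u. A (\<lambda>n. c * u n) = (\<lambda>n. c * A u n)"
    and cm: "\<And>h. (\<lambda>n. of_nat n * A h n - A (Nop h) n) = (\<lambda>n. s * B h n)"
    and AB: "\<And>h. A (B h) = B (A h)"
    and dB: "\<And>u v. B (\<lambda>n. u n - v n) = (\<lambda>n. B u n - B v n)"
  shows "(\<Sum>k=1..K. (1 / of_nat k) * (of_nat n * (A^^k) (\<lambda>m. g m - A g m) n
            - (A^^k) (Nop (\<lambda>m. g m - A g m)) n)) = s * (B g n - B ((A^^K) g) n)"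
proof (induction K)
  case 0 show ?case by simp
next
  case (Suc K)
  have t: "of_nat n * (A^^Suc K) (\<lambda>m. g m - A g m) n - (A^^Suc K) (Nop (\<lambda>m. g m - A g m)) n
     = of_nat (Suc K) * s * (B ((A^^K) g) n - B ((A^^Suc K) g) n)"
  proof -
    have "(A^^K) (\<lambda>m. g m - A g m) = (\<lambda>m. (A^^K) g m - (A^^Suc K) g m)"
      by (simp add: funpow_diff[of A, OF dA] funpow_swap1)
    thus ?thesis using comm_iter[OF dA sA cm AB, of K "\<lambda>m. g m - A g m"] by (simp add: dB)
  qed
  define T where "T k = (1 / of_nat k) * (of_nat n * (A^^k) (\<lambda>m. g m - A g m) n
            - (A^^k) (Nop (\<lambda>m. g m - A g m)) n)" for k
  have "T (Suc K) = s * (B ((A^^K) g) n - B ((A^^Suc K) g) n)"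
    unfolding T_def t by (simp del: of_nat_Suc)
  moreover have "(\<Sum>k=1..Suc K. T k) = (\<Sum>k=1..K. T k) + T (Suc K)" by simp
  moreover have "(\<Sum>k=1..K. T k) = s * (B g n - B ((A^^K) g) n)"
    using Suc.IH unfolding T_def .
  ultimately have "(\<Sum>k=1..Suc K. T k) = s * (B g n - B ((A^^Suc K) g) n)"
    by (simp only:) (simp add: algebra_simps)
  thus ?case unfolding T_def .
qed


lemma main_generic:
  fixes A B Y :: "vec \<Rightarrow> vec" and s :: complex
  assumes dA: "\<And>u v. A (\<lambda>n. u n - v n) = (\<lambda>n. A u n - A v n)"
    and sA: "\<And>c u. A (\<lambda>n. c * u n) = (\<lambda>n. c * A u n)"
    and cm: "\<And>h. (\<lambda>n. of_nat n * A h n - A (Nop h) n) = (\<lambda>n. s * B h n)"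
    and AB: "\<And>h. A (B h) = B (A h)"
    and dB: "\<And>u v. B (\<lambda>n. u n - v n) = (\<lambda>n. B u n - B v n)"
    and Y: "\<And>h. Y h = (\<lambda>m. h m - A h m)"
    and conv: "\<And>n. (\<lambda>K. B ((A^^K) g) n) \<longlonglongrightarrow> 0"
    and f: "f = Y g" and fD: "f \<in> logDom Y" and NfD: "Nop f \<in> logDom Y"
  shows "(\<lambda>n. Nop (logOp Y f) n - logOp Y (Nop f) n) = (\<lambda>n. - s * B g n)"
proof (rule ext)
  fix n
  have T: "(\<lambda>h m. h m - Y h m) = A" by (intro ext) (simp add: Y)
  have lp: "\<And>h K. logPartial Y h K n = (\<Sum>k=1..K. (1/of_nat k) * (A^^k) h n)"
    unfolding logPartial_def T by simp
  have fg: "f = (\<lambda>m. g m - A g m)" using f Y by simp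
  have seq: "\<And>K. of_nat n * logPartial Y f K n - logPartial Y (Nop f) K n = s * (B g n - B ((A^^K) g) n)"
  proof -
    fix K
    have "of_nat n * logPartial Y f K n - logPartial Y (Nop f) K n
       = (\<Sum>k=1..K. (1 / of_nat k) * (of_nat n * (A^^k) f n - (A^^k) (Nop f) n))"
      unfolding lp sum_distrib_left sum_subtractf[symmetric] by (simp add: algebra_simps)
    also have "\<dots> = s * (B g n - B ((A^^K) g) n)"
      unfolding fg by (rule comm_sum[OF dA sA cm AB dB])
    finally show "of_nat n * logPartial Y f K n - logPartial Y (Nop f) K n = s * (B g n - B ((A^^K) g) n)" .
  qed
  have L1: "(\<lambda>K. of_nat n * logPartial Y f K n - logPartial Y (Nop f) K n)
      \<longlonglongrightarrow> of_nat n * (- logOp Y f n) - (- logOp Y (Nop f) n)"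
    by (intro tendsto_intros logOp_lim fD NfD)
  have L2: "(\<lambda>K. of_nat n * logPartial Y f K n - logPartial Y (Nop f) K n) \<longlonglongrightarrow> s * (B g n - 0)"
    unfolding seq by (intro tendsto_intros conv)
  have "of_nat n * (- logOp Y f n) - (- logOp Y (Nop f) n) = s * (B g n - 0)"
    using LIMSEQ_unique[OF L1 L2] .
  thus "Nop (logOp Y f) n - logOp Y (Nop f) n = - s * B g n"
    unfolding Nop_def by (simp add: algebra_simps)
qed


lemma part1:
  assumes strong: "\<forall>f\<in>l2. (\<lambda>k. l2norm ((polyL p ^^ k) f)) \<longlonglongrightarrow> 0"
  shows "\<forall>f \<in> (Yop p ` l2) \<inter> DNlog (Yop p) \<inter> DlogN (Yop p).
           (\<lambda>n. Nop (logOp (Yop p) f) n - logOp (Yop p) (Nop f) n)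
             = Lsh (polyL (pderiv p) (inv_into l2 (Yop p) f))"
proof
  fix f assume hf: "f \<in> (Yop p ` l2) \<inter> DNlog (Yop p) \<inter> DlogN (Yop p)"
  define g where "g = inv_into l2 (Yop p) f"
  have g: "g \<in> l2" using hf by (auto simp: g_def inv_into_into)
  have fg: "f = Yop p g" using hf by (auto simp: g_def f_inv_into_f)
  have fD: "f \<in> logDom (Yop p)" and NfD: "Nop f \<in> logDom (Yop p)"
    using hf by (auto simp: DNlog_def DlogN_def)
  have pt: "(\<lambda>K. (polyL p ^^ K) g m) \<longlonglongrightarrow> 0" for m
  proof (rule tendsto_norm_zero_cancel, rule real_tendsto_sandwich[OF _ _ tendsto_const])
    show "(\<lambda>K. l2norm ((polyL p ^^ K) g)) \<longlonglongrightarrow> 0" using strong g by blast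
    show "\<forall>\<^sub>F K in sequentially. norm ((polyL p ^^ K) g m) \<le> l2norm ((polyL p ^^ K) g)"
      using l2_pt[OF polyL_pow_l2[OF g]] by auto
  qed auto
  have conv: "(\<lambda>K. Lsh (polyL (pderiv p) ((polyL p ^^ K) g)) n) \<longlonglongrightarrow> 0" for n
  proof -
    have "(\<lambda>K. \<Sum>i\<le>degree (pderiv p). coeff (pderiv p) i * (polyL p ^^ K) g (n + 1 + i))
       \<longlonglongrightarrow> (\<Sum>i\<le>degree (pderiv p). coeff (pderiv p) i * 0)"
      by (intro tendsto_intros pt)
    thus ?thesis unfolding Lsh_def polyL_def by simp
  qed
  have cm: "\<And>h. (\<lambda>n. of_nat n * polyL p h n - polyL p (Nop h) n) = (\<lambda>n. (-1) * Lsh (polyL (pderiv p) h) n)"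
    using comm_L by simp
  have AB: "\<And>h. polyL p (Lsh (polyL (pderiv p) h)) = Lsh (polyL (pderiv p) (polyL p h))"
    by (simp add: polyL_Lsh polyL_comm)
  have dB: "\<And>u v. Lsh (polyL (pderiv p) (\<lambda>n. u n - v n)) = (\<lambda>n. Lsh (polyL (pderiv p) u) n - Lsh (polyL (pderiv p) v) n)"
    by (simp add: polyL_diff Lsh_diff)
  have Y: "\<And>h. Yop p h = (\<lambda>m. h m - polyL p h m)" by (simp add: Yop_def)
  have "(\<lambda>n. Nop (logOp (Yop p) f) n - logOp (Yop p) (Nop f) n) = (\<lambda>n. - (-1) * Lsh (polyL (pderiv p) g) n)"
    by (rule main_generic[where A="polyL p" and B="\<lambda>h. Lsh (polyL (pderiv p) h)", OF polyL_diff polyL_scale cm AB dB Y conv fg fD NfD])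
  thus "(\<lambda>n. Nop (logOp (Yop p) f) n - logOp (Yop p) (Nop f) n) = Lsh (polyL (pderiv p) (inv_into l2 (Yop p) f))"
    by (simp add: g_def)
qed


lemma shift_sum:
  fixes u w :: "nat \<Rightarrow> complex"
  assumes w: "\<forall>k>M. w k = 0"
  shows "(\<Sum>j\<le>M. (if i \<le> j then u (j-i) * w j else 0)) = (\<Sum>j\<le>M. u j * w (j+i))"
proof (cases "i \<le> M")
  case True
  have "(\<Sum>j\<le>M. (if i \<le> j then u (j-i) * w j else 0)) = (\<Sum>j\<in>{x\<in>{..M}. i \<le> x}. u (j-i) * w j)"
    by (rule sum.inter_filter[symmetric]) simp
  also have "{x\<in>{..M}. i \<le> x} = {0+i..(M-i)+i}" using True by auto
  also have "(\<Sum>j\<in>{0+i..(M-i)+i}. u (j-i) * w j) = (\<Sum>j\<in>{0..M-i}. u j * w (j+i))"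
    by (subst sum.shift_bounds_cl_nat_ivl) simp
  also have "\<dots> = (\<Sum>j\<le>M. u j * w (j+i))"
    by (rule sum.mono_neutral_left) (use w in auto)
  finally show ?thesis .
next
  case False
  thus ?thesis using w by (auto intro!: sum.neutral)
qed

lemma polyL_supp: "\<forall>j>M. v j = 0 \<Longrightarrow> \<forall>j>M. polyL p v j = 0"
  by (simp add: polyL_def)

lemma polyL_pow_supp: "\<forall>j>M. v j = 0 \<Longrightarrow> \<forall>j>M. (polyL p ^^ K) v j = 0"
  by (induction K) (simp_all add: polyL_supp)

lemma adj:
  assumes v: "\<forall>j>M. v j = 0"
  shows "(\<Sum>j\<le>M. polyLs (map_poly cnj p) u j * cnj (v j)) = (\<Sum>j\<le>M. u j * cnj (polyL p v j))"
proof -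
  have dm: "degree (map_poly cnj p) = degree p" by (rule degree_map_poly) simp
  have "(\<Sum>j\<le>M. polyLs (map_poly cnj p) u j * cnj (v j))
     = (\<Sum>j\<le>M. \<Sum>i\<le>degree p. cnj (coeff p i) * (if i \<le> j then u (j-i) * cnj (v j) else 0))"
    unfolding polyLs_def dm by (auto simp: sum_distrib_right coeff_map_poly intro!: sum.cong)
  also have "\<dots> = (\<Sum>i\<le>degree p. cnj (coeff p i) * (\<Sum>j\<le>M. (if i \<le> j then u (j-i) * cnj (v j) else 0)))"
    by (subst sum.swap) (simp add: sum_distrib_left)
  also have "\<dots> = (\<Sum>i\<le>degree p. cnj (coeff p i) * (\<Sum>j\<le>M. u j * cnj (v (j+i))))"
    using shift_sum[of M "\<lambda>j. cnj (v j)"] v by simp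
  also have "\<dots> = (\<Sum>j\<le>M. u j * cnj (polyL p v j))"
    unfolding polyL_def cnj_sum sum_distrib_left
    by (subst sum.swap) (simp add: ac_simps)
  finally show ?thesis .
qed

lemma adj_pow:
  assumes v: "\<forall>j>M. v j = 0"
  shows "(\<Sum>j\<le>M. (polyLs (map_poly cnj p) ^^ K) u j * cnj (v j)) = (\<Sum>j\<le>M. u j * cnj ((polyL p ^^ K) v j))"
  using v
proof (induction K arbitrary: v)
  case 0 thus ?case by simp
next
  case (Suc K)
  have "(\<Sum>j\<le>M. (polyLs (map_poly cnj p) ^^ Suc K) u j * cnj (v j))
      = (\<Sum>j\<le>M. (polyLs (map_poly cnj p) ^^ K) u j * cnj (polyL p v j))"
    using adj[OF Suc.prems] by simp
  also have "\<dots> = (\<Sum>j\<le>M. u j * cnj ((polyL p ^^ K) (polyL p v) j))"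
    using Suc.IH[OF polyL_supp[OF Suc.prems]] .
  also have "(polyL p ^^ K) (polyL p v) = (polyL p ^^ Suc K) v" by (simp add: funpow_swap1)
  finally show ?case .
qed

lemma polyLs_pow_val:
  "(polyLs (map_poly cnj p) ^^ K) u m = (\<Sum>j\<le>m. u j * cnj ((polyL p ^^ K) (\<lambda>j. if j = m then 1 else 0) j))"
proof -
  have "(\<Sum>j\<le>m. (polyLs (map_poly cnj p) ^^ K) u j * cnj ((\<lambda>j. if j = m then 1 else 0) j))
     = (polyLs (map_poly cnj p) ^^ K) u m"
    by (simp add: if_distrib cong: if_cong)
  thus ?thesis using adj_pow[where M=m and v="\<lambda>j. if j = m then 1 else 0" and p=p and K=K and u=u] by simp
qed


lemma delta_l2: "(\<lambda>j. if j = m then (1::complex) else 0) \<in> l2"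
proof -
  have "summable (\<lambda>j. if j = m then (1::real) else 0)" by simp
  moreover have "(\<lambda>j. (cmod (if j = m then (1::complex) else 0))^2) = (\<lambda>j. if j = m then (1::real) else 0)"
    by auto
  ultimately show ?thesis by (simp add: l2_def)
qed

lemma polyLs_null:
  assumes "\<And>m. (\<lambda>K. X K m) \<longlonglongrightarrow> 0"
  shows "(\<lambda>K. polyLs r (X K) n) \<longlonglongrightarrow> 0"
  unfolding polyLs_def
proof (rule tendsto_null_sum)
  fix i show "(\<lambda>K. coeff r i * (if i \<le> n then X K (n - i) else 0)) \<longlonglongrightarrow> 0"
    by (cases "i \<le> n") (auto intro!: tendsto_mult_right_zero assms)
qed

lemma part2:
  assumes strong: "\<forall>f\<in>l2. (\<lambda>k. l2norm ((polyL p ^^ k) f)) \<longlonglongrightarrow> 0"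
  shows "\<forall>f \<in> (Ystar p ` l2) \<inter> DNlog (Ystar p) \<inter> DlogN (Ystar p).
           (\<lambda>n. Nop (logOp (Ystar p) f) n - logOp (Ystar p) (Nop f) n)
             = (\<lambda>n. - Rsh (polyLs (map_poly cnj (pderiv p)) (inv_into l2 (Ystar p) f)) n)"
proof
  fix f assume hf: "f \<in> (Ystar p ` l2) \<inter> DNlog (Ystar p) \<inter> DlogN (Ystar p)"
  define g where "g = inv_into l2 (Ystar p) f"
  have fg: "f = Ystar p g" using hf by (auto simp: g_def f_inv_into_f)
  have fD: "f \<in> logDom (Ystar p)" and NfD: "Nop f \<in> logDom (Ystar p)"
    using hf by (auto simp: DNlog_def DlogN_def)
  have ptL: "(\<lambda>K. (polyL p ^^ K) h j) \<longlonglongrightarrow> 0" if h: "h \<in> l2" for h j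
  proof (rule tendsto_norm_zero_cancel, rule real_tendsto_sandwich[OF _ _ tendsto_const])
    show "(\<lambda>K. l2norm ((polyL p ^^ K) h)) \<longlonglongrightarrow> 0" using strong h by blast
    show "\<forall>\<^sub>F K in sequentially. norm ((polyL p ^^ K) h j) \<le> l2norm ((polyL p ^^ K) h)"
      using l2_pt[OF polyL_pow_l2[OF h]] by auto
  qed auto
  have pt: "(\<lambda>K. (polyLs (map_poly cnj p) ^^ K) g m) \<longlonglongrightarrow> 0" for m
  proof -
    have "(\<lambda>K. \<Sum>j\<le>m. g j * cnj ((polyL p ^^ K) (\<lambda>j. if j = m then 1 else 0) j)) \<longlonglongrightarrow> 0"
      by (intro tendsto_null_sum tendsto_mult_right_zero tendsto_cnj[of _ 0, simplified] ptL delta_l2)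
    thus ?thesis by (simp add: polyLs_pow_val)
  qed
  have conv: "(\<lambda>K. Rsh (polyLs (map_poly cnj (pderiv p)) ((polyLs (map_poly cnj p) ^^ K) g)) n) \<longlonglongrightarrow> 0" for n
    unfolding Rsh_def by (cases "n = 0") (auto intro!: polyLs_null pt)
  have cm: "\<And>h. (\<lambda>n. of_nat n * polyLs (map_poly cnj p) h n - polyLs (map_poly cnj p) (Nop h) n)
      = (\<lambda>n. 1 * Rsh (polyLs (map_poly cnj (pderiv p)) h) n)"
    using comm_Ls by simp
  have AB: "\<And>h. polyLs (map_poly cnj p) (Rsh (polyLs (map_poly cnj (pderiv p)) h))
      = Rsh (polyLs (map_poly cnj (pderiv p)) (polyLs (map_poly cnj p) h))"
    by (simp add: polyLs_Rsh polyLs_comm)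
  have dB: "\<And>u v. Rsh (polyLs (map_poly cnj (pderiv p)) (\<lambda>n. u n - v n))
     = (\<lambda>n. Rsh (polyLs (map_poly cnj (pderiv p)) u) n - Rsh (polyLs (map_poly cnj (pderiv p)) v) n)"
    by (simp add: polyLs_diff Rsh_diff)
  have Y: "\<And>h. Ystar p h = (\<lambda>m. h m - polyLs (map_poly cnj p) h m)" by (simp add: Ystar_def)
  have "(\<lambda>n. Nop (logOp (Ystar p) f) n - logOp (Ystar p) (Nop f) n)
      = (\<lambda>n. - 1 * Rsh (polyLs (map_poly cnj (pderiv p)) g) n)"
    by (rule main_generic[where A="polyLs (map_poly cnj p)" and B="\<lambda>h. Rsh (polyLs (map_poly cnj (pderiv p)) h)",
          OF polyLs_diff polyLs_scale cm AB dB Y conv fg fD NfD])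
  thus "(\<lambda>n. Nop (logOp (Ystar p) f) n - logOp (Ystar p) (Nop f) n)
      = (\<lambda>n. - Rsh (polyLs (map_poly cnj (pderiv p)) (inv_into l2 (Ystar p) f)) n)"
    by (simp add: g_def)
qed

theorem mainTheorem14:
  fixes p :: "complex poly"
  assumes inj: "inj_on (Yop p) l2"
    and strong: "\<forall>f\<in>l2. (\<lambda>k. l2norm ((polyL p ^^ k) f)) \<longlonglongrightarrow> 0"
  shows "(\<forall>f \<in> (Yop p ` l2) \<inter> DNlog (Yop p) \<inter> DlogN (Yop p).
           (\<lambda>n. Nop (logOp (Yop p) f) n - logOp (Yop p) (Nop f) n)
             = Lsh (polyL (pderiv p) (inv_into l2 (Yop p) f)))
       \<and> (\<forall>f \<in> (Ystar p ` l2) \<inter> DNlog (Ystar p) \<inter> DlogN (Ystar p).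
           (\<lambda>n. Nop (logOp (Ystar p) f) n - logOp (Ystar p) (Nop f) n)
             = (\<lambda>n. - Rsh (polyLs (map_poly cnj (pderiv p)) (inv_into l2 (Ystar p) f)) n))"
  using part1[OF strong] part2[OF strong] by blast

end
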